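(* For every integer $m\geq 1$ and every real $x>0$, $$\frac{x}{2m^2(1+\sqrt{x})^3}(1+\sqrt{x})^{2m}\leq \beta_m(x)\leq (1+\sqrt{x})^{2m},$$ where $\beta_m(x)=\sum_{\ell=1}^m N(m,\ell)x^\ell$ and $N(m,\ell)=\frac{1}{m}\binom{m}{\ell-1}\binom{m}{\ell}$. *)

theory Defs
  imports Complex_Main
begin

definition narayana :: "nat \<Rightarrow> nat \<Rightarrow> real" where
  "narayana m l = (1 / real m) * real (m choose (l - 1)) * real (m choose l)"

definition beta :: "nat \<Rightarrow> real \<Rightarrow> real" where
  "beta m x = (\<Sum>l = 1..m. narayana m l * x ^ l)"

end

theory Submission
  imports Defs
begin

lemma bin_step: "(k+1) * (m choose (k+1)) = (m - k) * (m choose k)"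
  using times_binomial_minus1_eq[of "k+1" m] binomial_absorb_comp[of m k] by simp

lemma lc_step:
  assumes "i + 2 \<le> j" "j \<le> m"
  shows "(m choose i) * (m choose j) \<le> (m choose (i+1)) * (m choose (j-1))"
proof -
  have e1: "(i+1) * (m choose (i+1)) = (m - i) * (m choose i)" by (rule bin_step)
  have e2: "j * (m choose j) = (m - (j-1)) * (m choose (j-1))"
    using bin_step[of "j-1" m] assms by simp
  have "((m choose i) * (m choose j)) * ((m - i) * j)
        = ((i+1) * (m choose (i+1))) * (j * (m choose j))"
    using e1 by (simp add: algebra_simps)
  also have "\<dots> = ((i+1) * (m - (j-1))) * ((m choose (i+1)) * (m choose (j-1)))"
    using e2 by (simp add: algebra_simps)
  also have "\<dots> \<le> (j * (m - i)) * ((m choose (i+1)) * (m choose (j-1)))"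
    using assms by (intro mult_right_mono mult_mono) auto
  finally have "((m choose i) * (m choose j)) * ((m - i) * j)
      \<le> ((m choose (i+1)) * (m choose (j-1))) * ((m - i) * j)" by (simp add: mult.commute)
  moreover have "(m - i) * j > 0" using assms by simp
  ultimately show ?thesis by simp
qed

lemma lc_d:
  "i + 2*d + 1 \<le> m \<Longrightarrow> (m choose i) * (m choose (i + 2*d + 1)) \<le> (m choose (i+d)) * (m choose (i+d+1))"
proof (induction d arbitrary: i)
  case 0
  then show ?case by simp
next
  case (Suc d)
  have "(m choose i) * (m choose (i + 2*Suc d + 1)) \<le> (m choose (i+1)) * (m choose (i + 2*Suc d + 1 - 1))"
    using Suc.prems by (intro lc_step) auto
  also have "\<dots> = (m choose (i+1)) * (m choose ((i+1) + 2*d + 1))" by simp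
  also have "\<dots> \<le> (m choose (i+1+d)) * (m choose (i+1+d+1))"
    using Suc.prems by (intro Suc.IH) auto
  finally show ?case by simp
qed

lemma lc:
  assumes "i \<le> m" "j \<le> m" "odd (i+j)"
  shows "(m choose i) * (m choose j) \<le> (m choose ((i+j+1) div 2 - 1)) * (m choose ((i+j+1) div 2))"
proof (cases "i < j")
  case True
  have "odd (j - i)" using assms(3) True by (simp add: ac_simps)
  then obtain d where "j - i = 2*d + 1" by (rule oddE)
  then have d: "j = i + 2*d + 1" using True by simp
  have "(i+j+1) div 2 = i + d + 1" using d by simp
  then show ?thesis using lc_d[of i d m] d assms by simp
next
  case False
  then have "j < i" using assms(3) by (cases "i = j") auto
  have "odd (i - j)" using assms(3) \<open>j < i\<close> by (simp add: ac_simps)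
  then obtain d where "i - j = 2*d + 1" by (rule oddE)
  then have d: "i = j + 2*d + 1" using \<open>j < i\<close> by simp
  have "(i+j+1) div 2 = j + d + 1" using d by simp
  then show ?thesis using lc_d[of j d m] d assms by (simp add: mult.commute)
qed

lemma sumsq_le:
  fixes a :: "nat \<Rightarrow> real"
  assumes "\<And>i. a i \<ge> 0"
  shows "(\<Sum>i\<le>m. a i ^ 2) \<le> (\<Sum>i\<le>m. a i) ^ 2"
proof -
  have "(\<Sum>i\<le>m. a i) ^ 2 = (\<Sum>i\<le>m. \<Sum>j\<le>m. a i * a j)"
    by (simp add: power2_eq_square sum_product)
  moreover have "(\<Sum>i\<le>m. a i ^ 2) \<le> (\<Sum>i\<le>m. \<Sum>j\<le>m. a i * a j)"
  proof (rule sum_mono)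
    fix i assume "i \<in> {..m}"
    then have "(\<lambda>j. a i * a j) i \<le> (\<Sum>j\<le>m. a i * a j)"
      using assms by (intro member_le_sum) auto
    then show "a i ^ 2 \<le> (\<Sum>j\<le>m. a i * a j)" by (simp add: power2_eq_square)
  qed
  ultimately show ?thesis by simp
qed

lemma aux:
  fixes s M u :: real
  assumes "s > 0" "M > 0"
  shows "s^2 / (2 * M^2 * ((1+s)^2 * (1+s))) * (u * (1+s)^2) = s * (s * u) / (2 * M^2 * (1+s))"
proof -
  define v where "v = 1 + s"
  have v: "v > 0" using assms by (simp add: v_def)
  show ?thesis unfolding v_def[symmetric] using v assms(2) by (simp add: field_simps power2_eq_square)
qed

lemma aux2:
  fixes s M P :: real
  assumes "s > 0" "M > 0"
  shows "s * ((2 * M * (1+s)) * P) / (2 * M^2 * (1+s)) = s / M * P"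
proof -
  define v where "v = 1 + s"
  have v: "v > 0" using assms by (simp add: v_def)
  have "s * ((2 * M * v) * P) / (2 * M^2 * v) = s / M * P"
    using v assms(2) by (simp add: power2_eq_square)
  then show ?thesis by (simp add: v_def)
qed

theorem lemma1:
  fixes m :: nat and x :: real
  assumes "m \<ge> 1" and "x > 0"
  shows "x / (2 * real m ^ 2 * (1 + sqrt x) ^ 3) * (1 + sqrt x) ^ (2 * m) \<le> beta m x
         \<and> beta m x \<le> (1 + sqrt x) ^ (2 * m)"
proof -
  define s where "s = sqrt x"
  have s0: "s > 0" using assms s_def by simp
  have xs: "x = s^2" using assms s_def by simp
  define a where "a i = real (m choose i) * s ^ i" for i
  define t where "t k = real (m choose (k-1)) * real (m choose k) * s ^ (2*k-1)" for k
  define P where "P = (\<Sum>k=1..m. t k)"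
  have a0: "a i \<ge> 0" for i using s0 by (simp add: a_def)
  have t0: "t k \<ge> 0" for k using s0 by (simp add: t_def)
  have A: "(1 + s) ^ m = (\<Sum>i\<le>m. a i)"
    using binomial_ring[of s 1 m] unfolding a_def by (simp only: add.commute[of 1 s] power_one mult_1_right)
  have B: "(1 - s) ^ m = (\<Sum>i\<le>m. (-1)^i * a i)"
  proof -
    have "(1 - s) ^ m = (-s + 1) ^ m" by simp
    also have "\<dots> = (\<Sum>k\<le>m. of_nat (m choose k) * (-s) ^ k * 1 ^ (m - k))" by (rule binomial_ring)
    also have "\<dots> = (\<Sum>i\<le>m. (-1)^i * a i)"
    proof (rule sum.cong[OF refl])
      fix k show "real (m choose k) * (- s) ^ k * 1 ^ (m - k) = (- 1) ^ k * a k"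
        unfolding a_def by (subst power_minus) (simp add: mult_ac)
    qed
    finally show ?thesis .
  qed
  have beta_eq: "beta m x = s / real m * P"
    unfolding beta_def narayana_def P_def sum_distrib_left
  proof (rule sum.cong[OF refl])
    fix l assume "l \<in> {1..m}"
    then have "x ^ l = s * s ^ (2*l-1)" using xs
      by (metis One_nat_def Suc_pred mult_pos_pos nat_0_less_mult_iff power_Suc power_mult
           zero_less_numeral atLeastAtMost_iff less_eq_Suc_le)
    then show "1 / real m * real (m choose (l - 1)) * real (m choose l) * x ^ l = s / real m * t l"
      by (simp add: t_def)
  qed
  have up: "beta m x \<le> (1 + s) ^ (2 * m)"
  proof -
    have "beta m x \<le> (\<Sum>l=1..m. a l ^ 2)"
      unfolding beta_def
    proof (rule sum_mono)
      fix l assume l: "l \<in> {1..m}"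
      have "(m choose (l-1)) \<le> l * (m choose l)"
      proof -
        have "l * (m choose l) = (m - (l-1)) * (m choose (l-1))"
          using bin_step[of "l-1" m] l by (cases l) auto
        moreover have "m - (l-1) \<ge> 1" using l by auto
        ultimately show ?thesis by simp
      qed
      also have "\<dots> \<le> m * (m choose l)" using l by simp
      finally have c: "real (m choose (l-1)) \<le> real m * real (m choose l)" by (simp flip: of_nat_mult)
      have "narayana m l \<le> real (m choose l) ^ 2"
      proof -
        have "real (m choose (l-1)) * real (m choose l) \<le> (real m * real (m choose l)) * real (m choose l)"
          using c by (intro mult_right_mono) auto
        then show ?thesis unfolding narayana_def using assms(1)
          by (simp add: power2_eq_square field_simps)
      qed
      then have "narayana m l * x ^ l \<le> real (m choose l) ^ 2 * x ^ l"
        using assms(2) by (intro mult_right_mono) auto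
      moreover have "a l ^ 2 = real (m choose l) ^ 2 * x ^ l"
        unfolding a_def xs by (simp add: power_mult_distrib power_mult[symmetric] mult.commute)
      ultimately show "narayana m l * x ^ l \<le> a l ^ 2" by simp
    qed
    also have "\<dots> \<le> (\<Sum>l\<le>m. a l ^ 2)"
      by (rule sum_mono2) auto
    also have "\<dots> \<le> (\<Sum>l\<le>m. a l) ^ 2" using a0 by (rule sumsq_le)
    also have "\<dots> = (1+s)^(2*m)" using A by (simp add: power_mult mult.commute)
    finally show ?thesis .
  qed
  have inner: "(\<Sum>j\<le>m. a i * a j * (1 - (-1)^(i+j))) \<le> 2 * P" if im: "i \<le> m" for i
  proof -
    define J where "J = {j \<in> {..m}. odd (i+j)}"
    define g where "g j = (i+j+1) div 2" for j
    have ge: "2 * g j = i + j + 1" if "j \<in> J" for j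
    proof -
      have "odd (i+j)" using that by (simp add: J_def)
      then obtain q where "i + j = 2*q+1" by (rule oddE)
      then show ?thesis by (simp add: g_def)
    qed
    have S0: "(\<Sum>j\<le>m. a i * a j * (1 - (-1)^(i+j))) = (\<Sum>j\<le>m. if odd (i+j) then 2 * (a i * a j) else 0)"
    proof (rule sum.cong[OF refl])
      fix j
      show "a i * a j * (1 - (-1)^(i+j)) = (if odd (i+j) then 2 * (a i * a j) else 0)"
        by (simp only: minus_one_power_iff split: if_split) simp
    qed
    have S1: "(\<Sum>j\<le>m. if odd (i+j) then 2 * (a i * a j) else 0) = (\<Sum>j\<in>J. 2 * (a i * a j))"
      unfolding J_def by (rule sum.inter_filter[symmetric]) simp
    have S2: "(\<Sum>j\<in>J. a i * a j) \<le> (\<Sum>j\<in>J. t (g j))"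
    proof (rule sum_mono)
      fix j assume j: "j \<in> J"
      then have jm: "j \<le> m" and od: "odd (i+j)" by (auto simp: J_def)
      have e: "2 * g j - 1 = i + j" using ge[OF j] by simp
      have "(m choose i) * (m choose j) \<le> (m choose (g j - 1)) * (m choose (g j))"
        using lc[OF im jm od] by (simp add: g_def)
      then have "real (m choose i) * real (m choose j) \<le> real (m choose (g j - 1)) * real (m choose (g j))"
        by (simp flip: of_nat_mult)
      then have "real (m choose i) * real (m choose j) * s ^ (i+j) \<le> real (m choose (g j - 1)) * real (m choose (g j)) * s ^ (i+j)"
        using s0 by (intro mult_right_mono) auto
      moreover have "a i * a j = real (m choose i) * real (m choose j) * s ^ (i+j)"
        unfolding a_def by (simp add: power_add mult_ac)
      moreover have "t (g j) = real (m choose (g j - 1)) * real (m choose (g j)) * s ^ (i+j)"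
        unfolding t_def e by simp
      ultimately show "a i * a j \<le> t (g j)" by simp
    qed
    have inj: "inj_on g J"
    proof (rule inj_onI)
      fix j1 j2 assume "j1 \<in> J" "j2 \<in> J" "g j1 = g j2"
      then have "2 * g j1 = i + j1 + 1" "2 * g j2 = i + j2 + 1" using ge by blast+
      then show "j1 = j2" using \<open>g j1 = g j2\<close> by linarith
    qed
    have S3: "(\<Sum>j\<in>J. t (g j)) = (\<Sum>k\<in>g ` J. t k)"
      using sum.reindex[OF inj, of t] by simp
    have sub: "g ` J \<subseteq> {1..m}"
    proof
      fix k assume "k \<in> g ` J"
      then obtain j where j: "j \<in> J" "k = g j" by auto
      then have "j \<le> m" by (simp add: J_def)
      moreover have "2 * k = i + j + 1" using ge[OF j(1)] j(2) by simp
      ultimately have "1 \<le> k \<and> k \<le> m" using im by presburger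
      then show "k \<in> {1..m}" by simp
    qed
    have S4: "(\<Sum>k\<in>g ` J. t k) \<le> P"
      unfolding P_def using sub t0 by (intro sum_mono2) auto
    have "(\<Sum>j\<in>J. 2 * (a i * a j)) = 2 * (\<Sum>j\<in>J. a i * a j)" by (simp add: sum_distrib_left)
    then show ?thesis using S0 S1 S2 S3 S4 by linarith
  qed
  have AB: "(1+s)^(2*m) - (1-s)^(2*m) = (\<Sum>i\<le>m. \<Sum>j\<le>m. a i * a j * (1 - (-1)^(i+j)))"
  proof -
    have "(1+s)^(2*m) = ((1+s)^m) * ((1+s)^m)"
      by (simp only: power_even_eq power2_eq_square)
    also have "\<dots> = (\<Sum>i\<le>m. \<Sum>j\<le>m. a i * a j)"
      by (simp only: A sum_product)
    finally have 1: "(1+s)^(2*m) = (\<Sum>i\<le>m. \<Sum>j\<le>m. a i * a j)" .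
    have "(1-s)^(2*m) = ((1-s)^m) * ((1-s)^m)"
      by (simp only: power_even_eq power2_eq_square)
    also have "\<dots> = (\<Sum>i\<le>m. \<Sum>j\<le>m. ((-1)^i * a i) * ((-1)^j * a j))"
      by (simp only: B sum_product)
    also have "\<dots> = (\<Sum>i\<le>m. \<Sum>j\<le>m. (-1)^(i+j) * (a i * a j))"
      by (simp add: power_add mult_ac)
    finally have 2: "(1-s)^(2*m) = (\<Sum>i\<le>m. \<Sum>j\<le>m. (-1)^(i+j) * (a i * a j))" .
    show ?thesis unfolding 1 2 sum_subtractf[symmetric] by (rule sum.cong[OF refl])+ (simp add: algebra_simps)
  qed
  have upP: "(1+s)^(2*m) - (1-s)^(2*m) \<le> 2 * (real m + 1) * P"
  proof -
    have "(\<Sum>i\<le>m. \<Sum>j\<le>m. a i * a j * (1 - (-1)^(i+j))) \<le> (\<Sum>i\<le>m. 2 * P)"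
      by (rule sum_mono) (use inner in auto)
    moreover have "(\<Sum>i\<le>m. 2 * P) = 2 * (real m + 1) * P" by simp
    ultimately show ?thesis using AB by linarith
  qed
  obtain n where n: "m = Suc n" using assms(1) by (cases m) auto
  have lowP: "2 * s * (1+s)^(2*n) \<le> (1+s)^(2*m) - (1-s)^(2*m)"
  proof -
    have p1: "(1-s)^(2*n) \<le> (1+s)^(2*n)"
    proof -
      have "(1-s)^2 \<le> (1+s)^2" using s0 by (simp add: power2_eq_square algebra_simps)
      then have "((1-s)^2)^n \<le> ((1+s)^2)^n" by (rule power_mono) simp
      then show ?thesis by (simp only: power_mult)
    qed
    have p2: "(1-s)^2 \<le> 1 + s^2" using s0 by (simp add: power2_eq_square algebra_simps)
    have mm: "2*m = 2*n+2" using n by simp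
    have "(1-s)^(2*m) = (1-s)^(2*n) * (1-s)^2" unfolding mm by (rule power_add)
    also have "\<dots> \<le> (1+s)^(2*n) * (1 + s^2)"
      using p1 p2 by (intro mult_mono) auto
    finally have "(1-s)^(2*m) \<le> (1+s)^(2*n) * (1 + s^2)" .
    moreover have "(1+s)^(2*m) = (1+s)^(2*n) * (1 + s^2) + 2*s*(1+s)^(2*n)"
    proof -
      have "(1+s)^(2*m) = (1+s)^(2*n) * (1+s)^2" unfolding mm by (rule power_add)
      also have "(1+s)^2 = 1 + s^2 + 2*s" by (simp add: power2_eq_square algebra_simps)
      finally show ?thesis by (simp add: algebra_simps)
    qed
    ultimately show ?thesis by simp
  qed
  have key: "s * (1+s)^(2*n) \<le> (real m + 1) * P" using upP lowP by (simp add: algebra_simps)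
  have P0: "P \<ge> 0" unfolding P_def using t0 by (simp add: sum_nonneg)
  have mpos: "real m > 0" using assms(1) by simp
  have lo: "x / (2 * real m ^ 2 * (1 + s) ^ 3) * (1 + s) ^ (2 * m) \<le> s / real m * P"
  proof -
    have "x / (2 * real m ^ 2 * (1 + s) ^ 3) * (1 + s) ^ (2 * m)
        = s * (s * (1+s)^(2*n)) / (2 * real m ^ 2 * (1 + s))"
    proof -
      have mm: "2*m = 2*n+2" using n by simp
      have h1: "(1 + s) ^ (2 * m) = (1+s)^(2*n) * (1+s)^2" unfolding mm by (rule power_add)
      have h2: "(1+s)^3 = (1+s)^2 * (1+s)" by (simp add: numeral_3_eq_3 power2_eq_square)
      show ?thesis unfolding xs h1 h2 using s0 mpos
        by (rule aux)
    qed
    also have "\<dots> \<le> s * ((real m + 1) * P) / (2 * real m ^ 2 * (1 + s))"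
      using key s0 mpos by (intro divide_right_mono mult_left_mono) auto
    also have "\<dots> \<le> s * ((2 * real m * (1+s)) * P) / (2 * real m ^ 2 * (1 + s))"
    proof -
      have m1: "real m \<ge> 1" using assms(1) by simp
      have "0 \<le> real m * s" using s0 by simp
      then have "real m + 1 \<le> 2 * real m * (1+s)" using m1
        by (simp add: algebra_simps)
      then show ?thesis using s0 mpos P0 by (intro divide_right_mono mult_left_mono mult_right_mono) auto
    qed
    also have "\<dots> = s / real m * P" using s0 mpos by (rule aux2)
    finally show ?thesis .
  qed
  show ?thesis using up lo beta_eq unfolding s_def[symmetric] by simp
qed

end
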